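(* Let $S=(\mathcal{E},\Sigma,X,\mathcal{O})$ be an entity. Then $S$ is state atomic (i.e. for $p,q\in\Sigma$, if $O(e,p)\subseteq O(e,q)$ for all $e\in\mathcal{E}$ then $p=q$) if and only if the state eigen closure operator $cl_{eig}$ on $\Sigma$ satisfies the $T_1$ separation axiom.
   Context: An entity $S=(\mathcal{E},\Sigma,X,\mathcal{O})$ consists of a set $\mathcal{E}$, a set $\Sigma$, and for each $e\in\mathcal{E}$, $p\in\Sigma$ a nonempty set $O(e,p)$, with $X=\bigcup_{e,p}O(e,p)$. Let $O(e)=\bigcup_{p}O(e,p)$. For $e\in\mathcal{E}$, $eig_e:\mathcal{P}(O(e))\to\mathcal{P}(\Sigma)$ is $p\in eig_e(A)\iff O(e,p)\subseteq A$, and $\mathcal{F}(e)=\{eig_e(A):A\subseteq O(e)\}$. The state eigen closure system $\mathcal{F}_{eig}$ is the set of all intersections of families of elements of $\bigcup_e\mathcal{F}(e)$, and $cl_{eig}(K)=\bigcap\{F\in\mathcal{F}_{eig}:K\subseteq F\}$ for $K\subseteq\Sigma$. A closure operator $cl$ on $W$ satisfies $T_1$ iff $cl(\{w\})=\{w\}$ for all $w\in W$. *)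

theory Defs
  imports Main
begin

text \<open>An entity: a set of entities E, a set of states Sigma, and outcome sets
  Out e p (nonempty for e in E, p in Sigma). X is the union of all Out e p.\<close>

definition entity :: "'e set \<Rightarrow> 's set \<Rightarrow> ('e \<Rightarrow> 's \<Rightarrow> 'x set) \<Rightarrow> bool" where
  "entity E \<Sigma> Out \<longleftrightarrow> (\<forall>e\<in>E. \<forall>p\<in>\<Sigma>. Out e p \<noteq> {})"

definition outcomes_of :: "'s set \<Rightarrow> ('e \<Rightarrow> 's \<Rightarrow> 'x set) \<Rightarrow> 'e \<Rightarrow> 'x set" where
  "outcomes_of \<Sigma> Out e = (\<Union>p\<in>\<Sigma>. Out e p)"

definition eig :: "'s set \<Rightarrow> ('e \<Rightarrow> 's \<Rightarrow> 'x set) \<Rightarrow> 'e \<Rightarrow> 'x set \<Rightarrow> 's set" where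
  "eig \<Sigma> Out e A = {p\<in>\<Sigma>. Out e p \<subseteq> A}"

definition eig_family :: "'s set \<Rightarrow> ('e \<Rightarrow> 's \<Rightarrow> 'x set) \<Rightarrow> 'e \<Rightarrow> 's set set" where
  "eig_family \<Sigma> Out e = {eig \<Sigma> Out e A | A. A \<subseteq> outcomes_of \<Sigma> Out e}"

text \<open>Intersections of families (subsets of Sigma; the empty family gives Sigma).\<close>
definition F_eig :: "'e set \<Rightarrow> 's set \<Rightarrow> ('e \<Rightarrow> 's \<Rightarrow> 'x set) \<Rightarrow> 's set set" where
  "F_eig E \<Sigma> Out = {\<Sigma> \<inter> \<Inter>\<F> | \<F>. \<F> \<subseteq> (\<Union>e\<in>E. eig_family \<Sigma> Out e)}"

definition cl_eig :: "'e set \<Rightarrow> 's set \<Rightarrow> ('e \<Rightarrow> 's \<Rightarrow> 'x set) \<Rightarrow> 's set \<Rightarrow> 's set" where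
  "cl_eig E \<Sigma> Out K = \<Sigma> \<inter> \<Inter>{F\<in>F_eig E \<Sigma> Out. K \<subseteq> F}"

definition state_atomic :: "'e set \<Rightarrow> 's set \<Rightarrow> ('e \<Rightarrow> 's \<Rightarrow> 'x set) \<Rightarrow> bool" where
  "state_atomic E \<Sigma> Out \<longleftrightarrow>
     (\<forall>p\<in>\<Sigma>. \<forall>q\<in>\<Sigma>. (\<forall>e\<in>E. Out e p \<subseteq> Out e q) \<longrightarrow> p = q)"

definition T1_closure :: "'w set \<Rightarrow> ('w set \<Rightarrow> 'w set) \<Rightarrow> bool" where
  "T1_closure W cl \<longleftrightarrow> (\<forall>w\<in>W. cl {w} = {w})"

end

theory Submission
  imports Defs
begin

lemma cl_single:
  assumes p: "p \<in> \<Sigma>"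
  shows "cl_eig E \<Sigma> Out {p} = {q\<in>\<Sigma>. \<forall>e\<in>E. Out e q \<subseteq> Out e p}"
proof
  show "cl_eig E \<Sigma> Out {p} \<subseteq> {q\<in>\<Sigma>. \<forall>e\<in>E. Out e q \<subseteq> Out e p}"
  proof
    fix q assume q: "q \<in> cl_eig E \<Sigma> Out {p}"
    have "q \<in> \<Sigma>" using q by (simp add: cl_eig_def)
    moreover have "Out e q \<subseteq> Out e p" if e: "e \<in> E" for e
    proof -
      have A: "Out e p \<subseteq> outcomes_of \<Sigma> Out e" using p by (auto simp: outcomes_of_def)
      have G: "eig \<Sigma> Out e (Out e p) \<in> eig_family \<Sigma> Out e"
        using A unfolding eig_family_def by blast
      have F: "\<Sigma> \<inter> \<Inter>{eig \<Sigma> Out e (Out e p)} \<in> F_eig E \<Sigma> Out"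
        unfolding F_eig_def using G e by blast
      have "{p} \<subseteq> \<Sigma> \<inter> \<Inter>{eig \<Sigma> Out e (Out e p)}" using p by (simp add: eig_def)
      with F q have "q \<in> eig \<Sigma> Out e (Out e p)" unfolding cl_eig_def by blast
      then show ?thesis by (simp add: eig_def)
    qed
    ultimately show "q \<in> {q\<in>\<Sigma>. \<forall>e\<in>E. Out e q \<subseteq> Out e p}" by blast
  qed
next
  show "{q\<in>\<Sigma>. \<forall>e\<in>E. Out e q \<subseteq> Out e p} \<subseteq> cl_eig E \<Sigma> Out {p}"
  proof
    fix q assume q: "q \<in> {q\<in>\<Sigma>. \<forall>e\<in>E. Out e q \<subseteq> Out e p}"
    have "q \<in> F" if F: "F \<in> F_eig E \<Sigma> Out" and pF: "{p} \<subseteq> F" for F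
    proof -
      obtain \<F> where FF: "F = \<Sigma> \<inter> \<Inter>\<F>" and sub: "\<F> \<subseteq> (\<Union>e\<in>E. eig_family \<Sigma> Out e)"
        using F unfolding F_eig_def by blast
      have "q \<in> G" if G: "G \<in> \<F>" for G
      proof -
        obtain e A where e: "e \<in> E" and GA: "G = eig \<Sigma> Out e A"
          using sub G unfolding eig_family_def by blast
        have "p \<in> G" using pF FF G by blast
        then have "Out e p \<subseteq> A" using GA by (simp add: eig_def)
        then show ?thesis using q e GA by (auto simp: eig_def)
      qed
      then show ?thesis using q FF by blast
    qed
    then show "q \<in> cl_eig E \<Sigma> Out {p}" using q unfolding cl_eig_def by blast
  qed
qed

theorem mainTheorem5:
  fixes E :: "'e set" and \<Sigma> :: "'s set" and Out :: "'e \<Rightarrow> 's \<Rightarrow> 'x set"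
  assumes "entity E \<Sigma> Out"
  shows "state_atomic E \<Sigma> Out \<longleftrightarrow> T1_closure \<Sigma> (cl_eig E \<Sigma> Out)"
  unfolding state_atomic_def T1_closure_def
  by (auto simp: cl_single)

end
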